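(* For all integers $m,n\ge1$, $$T_{2m,n}(q)=\sum_{r=0}^{m-1}(-1)^r\binom{2m}{r}\frac{(1-q^{n(m-r)})(1-q^{(n+1)(m-r)})q^{rn}}{(1-q)^{2m}(1+q^{m-r})}.$$
   Context: $q$ is an indeterminate. For integers $m,n\ge1$, $$T_{m,n}(q)=\sum_{k=1}^{n}(-1)^{n-k}\left(\frac{1-q^k}{1-q}\right)^{m}q^{\frac m2(n-k)}.$$ *)

theory Defs
  imports "HOL-Computational_Algebra.Polynomial" "HOL-Computational_Algebra.Fraction_Field"
begin

text \<open>We work in the field of rational functions over the integers in an indeterminate
  sqq, which plays the role of q^(1/2); the indeterminate q is sqq^2.  This makes the
  factor q^((m/2)(n-k)) = sqq^(m(n-k)) meaningful for all m.\<close>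

definition sqq :: "int poly fract" where
  "sqq = Fract [:0, 1:] 1"

definition qv :: "int poly fract" where
  "qv = sqq ^ 2"

definition T :: "nat \<Rightarrow> nat \<Rightarrow> int poly fract" where
  "T m n = (\<Sum>k = 1..n. (-1) ^ (n - k) * ((1 - qv ^ k) / (1 - qv)) ^ m * sqq ^ (m * (n - k)))"

end

theory Submission
  imports Defs
begin

lemma pow_fract: "(Fract (p::int poly) 1) ^ k = Fract (p ^ k) 1"
  by (induct k) (simp_all add: One_fract_def)

lemma qv_pow: "qv ^ k = Fract ([:0,1:] ^ (2*k)) 1"
  unfolding qv_def sqq_def by (simp add: pow_fract power_mult[symmetric])

lemma fract_zero_iff: "Fract (p::int poly) 1 = 0 \<longleftrightarrow> p = 0"
  by (simp add: Zero_fract_def eq_fract)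

lemma coeff0_xpow: "k > 0 \<Longrightarrow> coeff ([:0,1::int:] ^ k) 0 = 0"
  by (cases k) (simp_all add: coeff_mult_0)

lemma one_minus_qv_ne: "k > 0 \<Longrightarrow> 1 - qv ^ k \<noteq> 0"
proof
  assume k: "k > 0" and h: "1 - qv ^ k = 0"
  have "1 - qv ^ k = Fract (1 - [:0,1:] ^ (2*k)) 1"
    by (simp add: qv_pow One_fract_def)
  with h have "(1 - [:0,1::int:] ^ (2*k)) = 0" by (simp add: fract_zero_iff)
  then have "coeff (1 - [:0,1::int:] ^ (2*k)) 0 = 0" by simp
  with k show False by (simp add: coeff0_xpow)
qed

lemma one_plus_qv_ne: "k > 0 \<Longrightarrow> 1 + qv ^ k \<noteq> 0"
proof
  assume k: "k > 0" and h: "1 + qv ^ k = 0"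
  have "1 + qv ^ k = Fract (1 + [:0,1:] ^ (2*k)) 1"
    by (simp add: qv_pow One_fract_def)
  with h have "(1 + [:0,1::int:] ^ (2*k)) = 0" by (simp add: fract_zero_iff)
  then have "coeff (1 + [:0,1::int:] ^ (2*k)) 0 = 0" by simp
  with k show False by (simp add: coeff0_xpow)
qed

lemma binom_split:
  fixes P :: "'a::comm_ring_1"
  shows "(1 - P) ^ (2*m) = (\<Sum>r<m. (-1)^r * of_nat (2*m choose r) * (P^r + P^(2*m-r)))
      + (-1)^m * of_nat (2*m choose m) * P^m"
proof -
  define f where "f j = (-1)^j * of_nat (2*m choose j) * P^j" for j
  have b1: "(1 - P) ^ (2*m) = (\<Sum>j\<le>2*m. f j)"
  proof -
    have "(1 - P) ^ (2*m) = (-P + 1) ^ (2*m)" by simp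
    also have "\<dots> = (\<Sum>k\<le>2*m. of_nat (2*m choose k) * (-P)^k * 1^(2*m-k))"
      by (rule binomial_ring)
    also have "\<dots> = (\<Sum>j\<le>2*m. f j)"
      by (rule sum.cong) (simp_all add: f_def power_minus[of P])
    finally show ?thesis .
  qed
  have b2: "{..2*m} = {..<m} \<union> {m..2*m}" by auto
  have b3: "(\<Sum>j\<le>2*m. f j) = (\<Sum>j<m. f j) + (\<Sum>j=m..2*m. f j)"
    unfolding b2 by (rule sum.union_disjoint) auto
  have b4: "(\<Sum>j=m..2*m. f j) = (\<Sum>j=m..2*m. f (2*m + m - j))"
    by (rule sum.atLeastAtMost_rev)
  have b5: "(\<Sum>j=m..2*m. f (2*m + m - j)) = (\<Sum>i=0..m. f (2*m - i))"
    by (rule sum.reindex_bij_witness[where i="\<lambda>i. m + i" and j="\<lambda>j. j - m"]) auto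
  have b6: "(\<Sum>i=0..m. f (2*m - i)) = (\<Sum>i<m. f (2*m - i)) + f m"
  proof -
    have "{0..m} = insert m {..<m}" by auto
    then show ?thesis by (simp add: add.commute)
  qed
  have *: "(1 - P) ^ (2*m) = (\<Sum>j<m. f j) + (\<Sum>i<m. f (2*m - i)) + f m"
    using b1 b3 b4 b5 b6 by (simp only: add.assoc)
  have **: "f (2*m - i) = (-1)^i * of_nat (2*m choose i) * P^(2*m-i)" if "i < m" for i
  proof -
    have "(2*m choose (2*m - i)) = (2*m choose i)" using that by (simp add: binomial_symmetric[symmetric])
    moreover have "((-1::'a)^(2*m-i)) = (-1)^i"
    proof -
      have "(2*m - i) = i + 2 * (m - i)" using that by simp
      then show ?thesis by (simp add: power_add power_mult)
    qed
    ultimately show ?thesis unfolding f_def by simp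
  qed
  have c1: "(\<Sum>i<m. f (2*m - i)) = (\<Sum>i<m. (-1)^i * of_nat (2*m choose i) * P^(2*m-i))"
    by (rule sum.cong) (simp_all add: **)
  show ?thesis unfolding * c1
    by (simp add: f_def sum.distrib distrib_left)
qed

lemma comb_identity:
  fixes P :: "'a::comm_ring_1"
  assumes "m \<ge> 1"
  shows "(\<Sum>r<m. (-1)^r * of_nat (2*m choose r) * (P^r * (1 - P^(m-r))^2)) = (1 - P)^(2*m)"
proof -
  define S where "S = (\<Sum>r<m. (-1)^r * of_nat (2*m choose r) :: 'a)"
  have "(1 - (1::'a)) ^ (2*m) = 0" using assms by (simp add: zero_power)
  then have h1: "2 * S + (-1)^m * of_nat (2*m choose m) = 0"
  proof -
    have "(\<Sum>r<m. (-1)^r * of_nat (2*m choose r) * ((1::'a)^r + 1^(2*m-r))) = 2 * S"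
      unfolding S_def sum_distrib_left by (rule sum.cong) (simp_all add: algebra_simps)
    with binom_split[of "1::'a" m] show ?thesis using \<open>(1 - (1::'a)) ^ (2*m) = 0\<close> by simp
  qed
  have e: "P^r * (1 - P^(m-r))^2 = (P^r + P^(2*m-r)) - 2 * P^m" if "r < m" for r
  proof -
    define s where "s = m - r"
    have s1: "m - r = s" "2*m - r = r + s + s" using that s_def by simp_all
    have s2: "P^m = P^r*P^s" using that s_def by (simp add: power_add[symmetric])
    have "P^r * (1 - P^s)^2 = (P^r + P^r*P^s*P^s) - 2 * (P^r*P^s)"
      by (simp add: power2_eq_square algebra_simps)
    then show ?thesis unfolding s1 s2 by (simp only: power_add)
  qed
  have "(\<Sum>r<m. (-1)^r * of_nat (2*m choose r) * (P^r * (1 - P^(m-r))^2))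
      = (\<Sum>r<m. (-1)^r * of_nat (2*m choose r) * (P^r + P^(2*m-r)) - (-1)^r * of_nat (2*m choose r) * (2 * P^m))"
  proof (rule sum.cong)
    fix r assume "r \<in> {..<m}"
    then have r: "r < m" by simp
    show "(-1)^r * of_nat (2*m choose r) * (P^r * (1 - P^(m-r))^2)
      = (-1)^r * of_nat (2*m choose r) * (P^r + P^(2*m-r)) - (-1)^r * of_nat (2*m choose r) * (2 * P^m)"
      unfolding e[OF r] by (rule right_diff_distrib)
  qed simp
  also have "\<dots> = (\<Sum>r<m. (-1)^r * of_nat (2*m choose r) * (P^r + P^(2*m-r))) - S * (2 * P^m)"
    unfolding S_def sum_distrib_right by (rule sum_subtractf)
  also have "\<dots> = (1 - P)^(2*m)"
  proof -
    have "2 * S = - ((-1)^m * of_nat (2*m choose m))" using h1 by (simp add: eq_neg_iff_add_eq_0)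
    then have "S * (2 * P^m) = - ((-1)^m * of_nat (2*m choose m) * P^m)"
      by (metis minus_mult_left mult.assoc mult.commute)
    then show ?thesis using binom_split[of P m] by simp
  qed
  finally show ?thesis .
qed


lemma step_id:
  fixes q :: "'a::field"
  assumes "r < m" and E: "1 + q^(m-r) \<noteq> 0"
  shows "(1 - q^(Suc n*(m-r))) * (1 - q^((Suc n+1)*(m-r))) * q^(r*Suc n) / (1 + q^(m-r))
       + q^m * ((1 - q^(n*(m-r))) * (1 - q^((n+1)*(m-r))) * q^(r*n) / (1 + q^(m-r)))
       = (q^(Suc n))^r * (1 - (q^(Suc n))^(m-r))^2"
proof -
  define s where "s = m - r"
  have m: "m = r + s" using assms(1) s_def by simp
  define N where "N = q^n"
  define u where "u = q^s"
  have u: "1 + u \<noteq> 0" using E by (simp add: u_def s_def)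
  have p1: "q^(Suc n*s) = N^s*u" "q^((Suc n+1)*s) = N^s*u^2" "q^(r*Suc n) = N^r*q^r"
    "q^m = q^r*u" "q^(n*s) = N^s" "q^((n+1)*s) = N^s*u" "q^(r*n) = N^r"
    "(q^(Suc n))^r = N^r*q^r" "(q^(Suc n))^s = N^s*u"
  proof -
    show "q^(Suc n*s) = N^s*u" unfolding N_def u_def
      by (simp add: power_mult[symmetric] power_add mult.commute)
    show "q^((Suc n+1)*s) = N^s*u^2" unfolding N_def u_def
      by (simp add: power_mult[symmetric] power_add mult.commute power2_eq_square)
    show "q^(r*Suc n) = N^r*q^r" unfolding N_def
      by (simp add: power_mult[symmetric] power_add mult.commute)
    show "q^m = q^r*u" unfolding u_def m by (simp add: power_add)
    show "q^(n*s) = N^s" unfolding N_def by (simp add: power_mult)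
    show "q^((n+1)*s) = N^s*u" unfolding N_def u_def
      by (simp add: power_mult[symmetric] power_add mult.commute)
    show "q^(r*n) = N^r" unfolding N_def by (simp add: power_mult mult.commute)
    show "(q^(Suc n))^r = N^r*q^r" unfolding N_def by (simp add: power_mult_distrib)
    show "(q^(Suc n))^s = N^s*u" unfolding N_def u_def by (simp add: power_mult_distrib)
  qed
  have p0: "q^(m-r) = u" by (simp add: u_def s_def)
  have key: "(1 - N^s*u) * (1 - N^s*u^2) * (N^r*q^r) / (1 + u) + q^r*u * ((1 - N^s) * (1 - N^s*u) * N^r / (1 + u))
        = (N^r*q^r) * (1 - N^s*u)^2"
  proof -
    have num: "(1 - N^s*u) * (1 - N^s*u^2) * (N^r*q^r) + q^r*u * ((1 - N^s) * (1 - N^s*u) * N^r)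
        = (1 + u) * ((N^r*q^r) * (1 - N^s*u)^2)"
      by (simp add: algebra_simps power2_eq_square)
    have "(1 - N^s*u) * (1 - N^s*u^2) * (N^r*q^r) / (1 + u) + q^r*u * ((1 - N^s) * (1 - N^s*u) * N^r / (1 + u))
        = ((1 - N^s*u) * (1 - N^s*u^2) * (N^r*q^r) + q^r*u * ((1 - N^s) * (1 - N^s*u) * N^r)) / (1 + u)"
      by (simp add: add_divide_distrib)
    also have "\<dots> = (N^r*q^r) * (1 - N^s*u)^2" unfolding num using u by simp
    finally show ?thesis .
  qed
  show ?thesis unfolding s_def[symmetric] p1 u_def[symmetric] by (rule key)
qed

lemma T_Suc: "T (2*m) (Suc n) = ((1 - qv^(Suc n))/(1-qv))^(2*m) - qv^m * T (2*m) n"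
proof -
  define a where "a k = ((1 - qv^k)/(1-qv))^(2*m)" for k
  define g where "g k = (-1)^(n - k) * a k * sqq^(2*m*(n - k))" for k
  have Tn: "T (2*m) n = (\<Sum>k=1..n. g k)" unfolding T_def g_def a_def by simp
  have "T (2*m) (Suc n) = (\<Sum>k=1..Suc n. (-1)^(Suc n - k) * a k * sqq^(2*m*(Suc n - k)))"
    unfolding T_def a_def by simp
  also have "\<dots> = (\<Sum>k=1..n. (-1)^(Suc n - k) * a k * sqq^(2*m*(Suc n - k))) + a (Suc n)"
    by simp
  also have "(\<Sum>k=1..n. (-1)^(Suc n - k) * a k * sqq^(2*m*(Suc n - k))) = (\<Sum>k=1..n. - (qv^m * g k))"
  proof (rule sum.cong)
    fix k assume "k \<in> {1..n}"
    then have k: "Suc n - k = Suc (n - k)" by (simp add: Suc_diff_le)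
    have q: "qv^m = sqq^(2*m)" unfolding qv_def by (simp add: power_mult)
    show "(-1)^(Suc n - k) * a k * sqq^(2*m*(Suc n - k)) = - (qv^m * g k)"
    proof -
      have "sqq^(2*m*(Suc n - k)) = qv^m * sqq^(2*m*(n - k))"
        unfolding k mult_Suc_right power_add q ..
      then show ?thesis unfolding g_def k by simp
    qed
  qed simp
  also have "\<dots> = - (qv^m * T (2*m) n)" unfolding Tn sum_negf sum_distrib_left ..
  finally show ?thesis unfolding a_def by simp
qed

lemma T_0: "T m 0 = 0" unfolding T_def by simp

definition R :: "nat \<Rightarrow> nat \<Rightarrow> int poly fract" where
  "R m n = (\<Sum>r = 0..<m. (-1) ^ r * of_nat ((2 * m) choose r) *
       ((1 - qv ^ (n * (m - r))) * (1 - qv ^ ((n + 1) * (m - r))) * qv ^ (r * n)) /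
       ((1 - qv) ^ (2 * m) * (1 + qv ^ (m - r))))"

lemma R_0: "R m 0 = 0" unfolding R_def by simp

lemma R_Suc:
  assumes "m \<ge> 1"
  shows "R m (Suc n) = ((1 - qv^(Suc n))/(1-qv))^(2*m) - qv^m * R m n"
proof -
  have D: "(1 - qv) ^ (2*m) \<noteq> 0" using one_minus_qv_ne[of 1] by simp
  define c where "c r = (-1) ^ r * of_nat ((2 * m) choose r) / (1 - qv) ^ (2 * m)" for r
  define A where "A k r = (1 - qv ^ (k * (m - r))) * (1 - qv ^ ((k + 1) * (m - r))) * qv ^ (r * k) / (1 + qv ^ (m - r))" for k r
  have Rk: "R m k = (\<Sum>r<m. c r * A k r)" for k
    unfolding R_def atLeast0LessThan
  proof (rule sum.cong)
    fix r assume "r \<in> {..<m}"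
    then have "1 + qv^(m-r) \<noteq> 0" by (intro one_plus_qv_ne) simp
    then show "(-1) ^ r * of_nat ((2 * m) choose r) *
       ((1 - qv ^ (k * (m - r))) * (1 - qv ^ ((k + 1) * (m - r))) * qv ^ (r * k)) /
       ((1 - qv) ^ (2 * m) * (1 + qv ^ (m - r))) = c r * A k r"
      unfolding c_def A_def using D by simp
  qed simp
  have "R m (Suc n) + qv^m * R m n = (\<Sum>r<m. c r * (A (Suc n) r + qv^m * A n r))"
    unfolding Rk sum_distrib_left sum.distrib[symmetric] by (rule sum.cong) (simp_all add: algebra_simps)
  also have "\<dots> = (\<Sum>r<m. c r * ((qv^(Suc n))^r * (1 - (qv^(Suc n))^(m-r))^2))"
  proof (rule sum.cong)
    fix r assume "r \<in> {..<m}"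
    then have r: "r < m" by simp
    then have "1 + qv^(m-r) \<noteq> 0" by (intro one_plus_qv_ne) simp
    from step_id[OF r this, of n]
    show "c r * (A (Suc n) r + qv^m * A n r) = c r * ((qv^(Suc n))^r * (1 - (qv^(Suc n))^(m-r))^2)"
      unfolding A_def by simp
  qed simp
  also have "\<dots> = (\<Sum>r<m. (-1)^r * of_nat (2*m choose r) * ((qv^(Suc n))^r * (1 - (qv^(Suc n))^(m-r))^2)) / (1 - qv) ^ (2 * m)"
    unfolding c_def sum_divide_distrib by (rule sum.cong) simp_all
  also have "\<dots> = (1 - qv^(Suc n))^(2*m) / (1 - qv) ^ (2 * m)"
    unfolding comb_identity[OF assms] ..
  also have "\<dots> = ((1 - qv^(Suc n))/(1-qv))^(2*m)" by (simp add: power_divide)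
  finally show ?thesis by (simp add: algebra_simps)
qed

theorem lemma2p2:
  fixes m n :: nat
  assumes "m \<ge> 1" and "n \<ge> 1"
  shows "T (2 * m) n =
    (\<Sum>r = 0..<m. (-1) ^ r * of_nat ((2 * m) choose r) *
       ((1 - qv ^ (n * (m - r))) * (1 - qv ^ ((n + 1) * (m - r))) * qv ^ (r * n)) /
       ((1 - qv) ^ (2 * m) * (1 + qv ^ (m - r))))"
proof -
  have "T (2 * m) k = R m k" for k
  proof (induction k)
    case 0 then show ?case by (simp add: T_0 R_0)
  next
    case (Suc k) then show ?case by (simp add: T_Suc R_Suc[OF assms(1)])
  qed
  then show ?thesis unfolding R_def .
qed

end
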